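(* Consider Model 1 (the risk-averse insider model) with $N\ge 1$ trading periods, as described in the context. A subgame perfect linear equilibrium exists. In this equilibrium there are real numbers $\beta_n,\lambda_n,\alpha_n,\delta_n,\Sigma_n$ such that for $n=1,\dots,N$: $x_n=\beta_n(v-p_{n-1})$, $p_n-p_{n-1}=\lambda_n y_n$, $\Sigma_n=\operatorname{Var}(v\mid y_1,\dots,y_n)$, and $$E\Big(\sum_{k=n}^N\pi_k\,\Big|\,p_1,\dots,p_{n-1},v\Big)=\alpha_{n-1}(v-p_{n-1})^2+\delta_{n-1},$$ where $$\delta_n=a_n\sigma_u\Delta t_N^{1/2}\Sigma_n^{1/2},\quad \alpha_n=b_n\sigma_u\Delta t_N^{1/2}\Sigma_n^{-1/2}\quad(n=0,1,\dots,N-1),\qquad \beta_n=c_n\sigma_u\Delta t_N^{1/2}\Sigma_{n-1}^{-1/2}\quad(n=1,\dots,N),$$ and the sequences $\{a_n\},\{b_n\},\{c_n\}$, with terminal values $a_{N-1}=0$, $b_{N-1}=\tfrac12$, $c_N=1$, satisfy for $n=1,\dots,N-1$ the recursion $$a_{n-1}=a_n\Big(\frac{1}{c_n^2+1}\Big)^{1/2}+b_n\Big(\frac{1}{c_n^2+1}\Big)^{3/2}c_n^2,\qquad b_{n-1}=b_n\Big(\frac{1}{c_n^2+1}\Big)^{3/2}+\frac{c_n}{c_n^2+1},\qquad c_n=\Big(\frac{2b_n-a_n}{a_n+b_n}\Big)^{1/2},$$ with $c_n>0$ for $n=1,\dots,N$.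
   Context: Model. Fix an integer $N\ge1$ and put $\Delta t_N=1/N$. A risky asset has liquidation value $v\sim N(p_0,\Sigma_0)$ with $\Sigma_0=\sigma_v^2>0$. In each period $n=1,\dots,N$ noise traders submit $u_n\sim N(0,\sigma_u^2\Delta t_N)$ ($\sigma_u>0$), the $u_n$ i.i.d. and independent of $v$. The insider knows $v$ and submits an order $x_n=\beta_n(v-p_{n-1})$ with $\beta_n\in\mathbb R$ (this is the insider's strategy space). The market maker observes the total order $y_n=x_n+u_n$ and sets the price $p_n=E[v\mid y_1,\dots,y_n]$ (semi-strong market efficiency). The insider's profit in period $n$ is $\pi_n=x_n(v-p_n)$, and $\Sigma_n=\operatorname{Var}(v\mid y_1,\dots,y_n)$. For such strategies, with $\lambda_n=\beta_n\Sigma_{n-1}/(\beta_n^2\Sigma_{n-1}+\sigma_u^2\Delta t_N)$ one has $p_n-p_{n-1}=\lambda_ny_n$ and $\Sigma_n=\Sigma_{n-1}\sigma_u^2\Delta t_N/(\beta_n^2\Sigma_{n-1}+\sigma_u^2\Delta t_N)$, and $E(\sum_{k=n}^N\pi_k\mid p_1,\dots,p_{n-1},v)=\alpha_{n-1}(v-p_{n-1})^2+\delta_{n-1}$ with $\alpha_N=\delta_N=0$, $\alpha_{n-1}=\alpha_n(1-\lambda_n\beta_n)^2+\beta_n(1-\lambda_n\beta_n)$, $\delta_{n-1}=\delta_n+\alpha_n\lambda_n^2\sigma_u^2\Delta t_N$. Here $\alpha_{n-1}(v-p_{n-1})^2$ is the "risky profit" and $\delta_{n-1}$ the "guaranteed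 profit". Equilibrium. An insider strategy specifies, for each period $n$ and each value $\Sigma_{n-1}>0$ of the current conditional variance, an intensity $\beta_n$. Given the strategy for periods $n+1,\dots,N$, each choice of $\beta_n$ determines (through the formulas above, with later intensities given by the strategy applied to the resulting conditional variances) $\alpha_{n-1}$ and $\delta_{n-1}$ as functions of $\beta_n$ and $\Sigma_{n-1}$. A subgame perfect (linear) equilibrium of Model 1 is a strategy such that for every $n$ and every $\Sigma_{n-1}>0$ the prescribed $\beta_n$ first maximizes the guaranteed profit $\delta_{n-1}$ over $\beta_n\in\mathbb R$, and, among the maximizers of $\delta_{n-1}$, maximizes the risky profit $\alpha_{n-1}(v-p_{n-1})^2$ (i.e. maximizes $\alpha_{n-1}$), with the market maker pricing efficiently given this strategy. *)

theory Defs
  imports Complex_Main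
begin

text \<open>An insider strategy
  str n S gives the intensity beta_n used in period n when the current conditional
  variance is Sigma_{n-1} = S.\<close>

definition dtN :: "nat \<Rightarrow> real" where
  "dtN N = 1 / real N"

definition lam :: "real \<Rightarrow> nat \<Rightarrow> real \<Rightarrow> real \<Rightarrow> real" where
  "lam su N S b = b * S / (b\<^sup>2 * S + su\<^sup>2 * dtN N)"

definition sig_next :: "real \<Rightarrow> nat \<Rightarrow> real \<Rightarrow> real \<Rightarrow> real" where
  "sig_next su N S b = S * su\<^sup>2 * dtN N / (b\<^sup>2 * S + su\<^sup>2 * dtN N)"

text \<open>cont su N str m S = (alpha_{n-1}, delta_{n-1}) where m = N - n + 1 is the
  number of remaining periods (so the current period is n = N - m + 1), Sigma_{n-1} = S,
  and the insider follows str in periods n..N.  step_val gives the same pair when the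
  current intensity is an arbitrary b and str is followed afterwards.\<close>
fun cont :: "real \<Rightarrow> nat \<Rightarrow> (nat \<Rightarrow> real \<Rightarrow> real) \<Rightarrow> nat \<Rightarrow> real \<Rightarrow> real \<times> real" where
  "cont su N str 0 S = (0, 0)"
| "cont su N str (Suc m) S =
     (let b = str (N - m) S;
          l = lam su N S b;
          (a, d) = cont su N str m (sig_next su N S b)
      in (a * (1 - l * b)\<^sup>2 + b * (1 - l * b), d + a * l\<^sup>2 * su\<^sup>2 * dtN N))"

definition step_val :: "real \<Rightarrow> nat \<Rightarrow> (nat \<Rightarrow> real \<Rightarrow> real) \<Rightarrow> nat \<Rightarrow> real \<Rightarrow> real \<Rightarrow> real \<times> real" where
  "step_val su N str n S b =
     (let l = lam su N S b;
          (a, d) = cont su N str (N - n) (sig_next su N S b)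
      in (a * (1 - l * b)\<^sup>2 + b * (1 - l * b), d + a * l\<^sup>2 * su\<^sup>2 * dtN N))"

definition is_SPE :: "real \<Rightarrow> nat \<Rightarrow> (nat \<Rightarrow> real \<Rightarrow> real) \<Rightarrow> bool" where
  "is_SPE su N str \<longleftrightarrow>
     (\<forall>n \<in> {1..N}. \<forall>S > 0.
        (\<forall>b. snd (step_val su N str n S b) \<le> snd (step_val su N str n S (str n S))) \<and>
        (\<forall>b. snd (step_val su N str n S b) = snd (step_val su N str n S (str n S)) \<longrightarrow>
              fst (step_val su N str n S b) \<le> fst (step_val su N str n S (str n S))))"

fun sig_path :: "real \<Rightarrow> nat \<Rightarrow> (nat \<Rightarrow> real \<Rightarrow> real) \<Rightarrow> real \<Rightarrow> nat \<Rightarrow> real" where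
  "sig_path su N str S0 0 = S0"
| "sig_path su N str S0 (Suc n) =
     sig_next su N (sig_path su N str S0 n) (str (Suc n) (sig_path su N str S0 n))"

end

theory Submission
  imports Defs
begin

definition Cf :: "nat \<Rightarrow> real \<Rightarrow> real \<Rightarrow> real" where
  "Cf k A B = (if k = 0 then 1 else sqrt ((2*B - A)/(A+B)))"

fun AB :: "nat \<Rightarrow> real \<times> real" where
  "AB 0 = (0,0)"
| "AB (Suc k) = (let A = fst (AB k); B = snd (AB k); c = Cf k A B; r = sqrt (1/(c\<^sup>2+1))
     in (A*r + B*r^3*c\<^sup>2, B*r^3 + c/(c\<^sup>2+1)))"

definition "Aa k = fst (AB k)"
definition "Bb k = snd (AB k)"
definition "Cc k = Cf k (Aa k) (Bb k)"

lemma AB_Suc: "Aa (Suc k) = Aa k * sqrt (1/((Cc k)\<^sup>2+1)) + Bb k * (sqrt (1/((Cc k)\<^sup>2+1)))^3 * (Cc k)\<^sup>2"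
  "Bb (Suc k) = Bb k * (sqrt (1/((Cc k)\<^sup>2+1)))^3 + Cc k/((Cc k)\<^sup>2+1)"
  by (simp_all add: Aa_def Bb_def Cc_def Let_def)

lemma inv: "k \<ge> 1 \<Longrightarrow> Aa k \<ge> 0 \<and> Bb k > 0 \<and> 2 * Bb k > Aa k"
proof (induction k)
  case 0 then show ?case by simp
next
  case (Suc k)
  show ?case
  proof (cases "k = 0")
    case True
    have "sqrt (1/2) ^ 3 = sqrt (1/2) * (1/2)"
      by (metis power2_eq_square power3_eq_cube real_sqrt_pow2 zero_le_divide_1_iff zero_le_numeral
           mult.assoc)
    then show ?thesis using True by (simp add: AB_Suc Cc_def Cf_def Aa_def Bb_def)
  next
    case False
    then have IH: "Aa k \<ge> 0" "Bb k > 0" "2 * Bb k > Aa k" using Suc by auto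
    define A where "A = Aa k"
    define B where "B = Bb k"
    define t where "t = (2*B - A)/(A+B)"
    have ABp: "A + B > 0" using IH A_def B_def by simp
    have tp: "t > 0" unfolding t_def using IH ABp A_def B_def by simp
    have c: "Cc k = sqrt t" using False by (simp add: Cc_def Cf_def t_def A_def B_def)
    have c2: "(Cc k)\<^sup>2 = t" using c tp by simp
    have cp: "Cc k > 0" using c tp by simp
    define r where "r = sqrt (1/(t+1))"
    have rp: "r > 0" using tp r_def by simp
    have r2: "r\<^sup>2 = 1/(t+1)" using tp r_def by simp
    have ht: "(A+B)*t = 2*B - A" using ABp t_def by simp
    have eA: "Aa (Suc k) = A*r + B*r^3*t" using AB_Suc c2 r_def A_def B_def by simp
    have eB: "Bb (Suc k) = B*r^3 + Cc k/(t+1)" using AB_Suc c2 r_def A_def B_def by simp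
    have key: "A*r + B*r^3*t = 2*B*r^3"
    proof -
      have "A*r + B*r^3*t = r^3 * (A*(t+1) + B*t)"
      proof -
        have "r^2*(t+1) = 1" using r2 tp by simp
        hence "r^3*(t+1) = r" by (simp add: power2_eq_square power3_eq_cube algebra_simps)
        have "r^3 * (A*(t+1) + B*t) = A*(r^3*(t+1)) + B*r^3*t" by (simp add: algebra_simps)
        thus ?thesis using \<open>r^3*(t+1) = r\<close> by simp
      qed
      also have "A*(t+1) + B*t = 2*B" using ht by (simp add: algebra_simps)
      finally show ?thesis by simp
    qed
    have g1: "Aa (Suc k) \<ge> 0" using eA IH A_def B_def rp tp by simp
    have g2: "Bb (Suc k) > 0" using eB IH B_def rp tp cp by (simp add: add_pos_pos)
    have d: "2 * Bb (Suc k) - Aa (Suc k) = 2 * Cc k/(t+1)"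
      using eA eB key by simp
    have "2 * Cc k/(t+1) > 0" using cp tp by simp
    hence "2 * Bb (Suc k) > Aa (Suc k)" using d by linarith
    with g1 g2 show ?thesis by simp
  qed
qed

lemma pos1: "(0::real) < x\<^sup>2 + 1"
  using zero_le_power2[of x] by linarith

lemma sF: fixes c :: real
  shows "A*sqrt (1/(c\<^sup>2+1)) + B*(sqrt (1/(c\<^sup>2+1)))^3*c\<^sup>2
     = (A+B)*sqrt (1/(c\<^sup>2+1)) - B*(sqrt (1/(c\<^sup>2+1)))^3"
proof -
  define s where "s = sqrt (1/(c\<^sup>2+1))"
  have "s\<^sup>2 = 1/(c\<^sup>2+1)" unfolding s_def by (simp add: add_pos_nonneg)
  hence "s\<^sup>2 * (c\<^sup>2+1) = 1" using pos1[of c] by (simp add: field_simps)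
  hence "s * (s\<^sup>2 * (c\<^sup>2+1)) = s" by simp
  hence "s^3*c\<^sup>2 = s - s^3" by (simp add: power2_eq_square power3_eq_cube algebra_simps)
  hence h: "B*(s^3*c\<^sup>2) = B*s - B*s^3" by (simp add: right_diff_distrib)
  have "(A+B)*s = A*s + B*s" by (simp add: distrib_right)
  hence "A*s + B*s^3*c\<^sup>2 = (A+B)*s - B*s^3" using h by (simp add: mult.assoc)
  thus ?thesis unfolding s_def .
qed

lemma opt_pos:
  fixes A B c :: real
  assumes "A \<ge> 0" "B > 0" "2*B > A"
  defines "c0 \<equiv> sqrt ((2*B - A)/(A+B))"
  defines "s \<equiv> sqrt (1/(c\<^sup>2+1))" and "s0 \<equiv> sqrt (1/(c0\<^sup>2+1))"
  shows "A*s + B*s^3*c\<^sup>2 \<le> A*s0 + B*s0^3*c0\<^sup>2"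
    and "A*s + B*s^3*c\<^sup>2 = A*s0 + B*s0^3*c0\<^sup>2 \<Longrightarrow> B*s^3 + c/(c\<^sup>2+1) \<le> B*s0^3 + c0/(c0\<^sup>2+1)"
proof -
  define t where "t = (2*B - A)/(A+B)"
  have ABp: "A+B > 0" using assms by simp
  have tp: "t > 0" unfolding t_def using assms ABp by simp
  have c0t: "c0 = sqrt t" by (simp add: c0_def t_def)
  have c02: "c0\<^sup>2 = t" using tp c0t by simp
  have c0p: "c0 > 0" using tp by (simp add: c0_def t_def)
  have s0p: "s0 > 0" unfolding s0_def using pos1[of c0] by simp
  have sp: "s > 0" unfolding s_def using pos1[of c] by simp
  have s02: "s0\<^sup>2 = 1/(t+1)" unfolding s0_def using c02 tp by simp
  have s2: "s\<^sup>2 = 1/(c\<^sup>2+1)" unfolding s_def by (simp add: add_pos_nonneg)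
  have t1: "t + 1 = 3*B/(A+B)" unfolding t_def using ABp by (simp add: field_simps)
  have "s0\<^sup>2 = (A+B)/(3*B)" using s02 t1 by simp
  hence AB3: "A + B = 3*B*s0\<^sup>2" using assms(2) by (simp add: field_simps)
  have F: "A*s + B*s^3*c\<^sup>2 = (A+B)*s - B*s^3" unfolding s_def by (rule sF)
  have F0: "A*s0 + B*s0^3*c0\<^sup>2 = (A+B)*s0 - B*s0^3" unfolding s0_def by (rule sF)
  have diff: "(A*s0 + B*s0^3*c0\<^sup>2) - (A*s + B*s^3*c\<^sup>2) = B*(s0-s)\<^sup>2*(2*s0+s)"
    unfolding F F0 AB3 by (simp add: power2_eq_square power3_eq_cube algebra_simps)
  have nn: "B*(s0-s)\<^sup>2*(2*s0+s) \<ge> 0" using assms sp s0p by simp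
  show "A*s + B*s^3*c\<^sup>2 \<le> A*s0 + B*s0^3*c0\<^sup>2" using diff nn by linarith
  assume eq: "A*s + B*s^3*c\<^sup>2 = A*s0 + B*s0^3*c0\<^sup>2"
  hence "B*(s0-s)\<^sup>2*(2*s0+s) = 0" using diff by linarith
  moreover have "B*(2*s0+s) \<noteq> 0" using assms(2) sp s0p by simp
  ultimately have "(s0-s)\<^sup>2 = 0" by (metis mult.commute mult.left_commute mult_eq_0_iff)
  hence "s = s0" by simp
  hence "1/(c\<^sup>2+1) = 1/(c0\<^sup>2+1)" using s2 s02 c02 by simp
  hence "c\<^sup>2 = c0\<^sup>2" by (simp add: add_pos_nonneg)
  hence "\<bar>c\<bar> = c0" using c0p by (metis abs_of_pos real_sqrt_abs)
  hence "c \<le> c0" by linarith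
  hence "c/(c\<^sup>2+1) \<le> c0/(c0\<^sup>2+1)" using \<open>c\<^sup>2 = c0\<^sup>2\<close>
    by (simp add: divide_right_mono add_pos_nonneg)
  thus "B*s^3 + c/(c\<^sup>2+1) \<le> B*s0^3 + c0/(c0\<^sup>2+1)" using \<open>s = s0\<close> by simp
qed

lemma opt_zero: "c/(c\<^sup>2+1) \<le> (1::real)/(1\<^sup>2+1)"
proof -
  have "0 \<le> (c - 1)\<^sup>2" by simp
  hence "2*c \<le> c\<^sup>2+1" by (simp add: power2_eq_square algebra_simps)
  thus ?thesis by (simp add: field_simps add_pos_nonneg)
qed

lemma step:
  fixes su S b A B :: real and N k :: nat and str
  assumes su: "su > 0" and N: "N \<ge> 1" and S: "S > 0"
  and hyp: "\<And>S'. S' > 0 \<Longrightarrow> cont su N str k S' =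
        (B * (su * sqrt (dtN N)) / sqrt S', A * (su * sqrt (dtN N)) * sqrt S')"
  shows "(let l = lam su N S b; (a, d) = cont su N str k (sig_next su N S b)
           in (a * (1 - l * b)\<^sup>2 + b * (1 - l * b), d + a * l\<^sup>2 * su\<^sup>2 * dtN N))
    = (su * sqrt (dtN N) / sqrt S * (B * (sqrt (1/((b*sqrt S/(su * sqrt (dtN N)))\<^sup>2+1)))^3
            + (b*sqrt S/(su * sqrt (dtN N))) / ((b*sqrt S/(su * sqrt (dtN N)))\<^sup>2+1)),
       su * sqrt (dtN N) * sqrt S * (A * sqrt (1/((b*sqrt S/(su * sqrt (dtN N)))\<^sup>2+1))
            + B * (sqrt (1/((b*sqrt S/(su * sqrt (dtN N)))\<^sup>2+1)))^3 * (b*sqrt S/(su * sqrt (dtN N)))\<^sup>2))"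
proof -
  define q where "q = dtN N"
  have qp: "q > 0" using N by (simp add: q_def dtN_def)
  define \<sigma> where "\<sigma> = su * sqrt q"
  have sp: "\<sigma> > 0" using su qp by (simp add: \<sigma>_def)
  have s2: "\<sigma>\<^sup>2 = su\<^sup>2 * q" using qp by (simp add: \<sigma>_def power_mult_distrib)
  define sS where "sS = sqrt S"
  have sSp: "sS > 0" using S by (simp add: sS_def)
  have sS2: "S = sS\<^sup>2" using S by (simp add: sS_def)
  define c where "c = b * sS / \<sigma>"
  define D where "D = c\<^sup>2 + 1"
  have Dp: "D > 0" using pos1[of c] by (simp add: D_def)
  define sD where "sD = sqrt D"
  have sDp: "sD > 0" using Dp by (simp add: sD_def)
  have sD2: "D = sD\<^sup>2" using Dp by (simp add: sD_def)
  have hb: "b = c * \<sigma> / sS" using sp sSp by (simp add: c_def)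
  have den: "b\<^sup>2 * S + su\<^sup>2 * q = \<sigma>\<^sup>2 * D"
    unfolding D_def c_def sS2 s2[symmetric] using sp sSp by (simp add: field_simps)
  have hsig: "sig_next su N S b = S / D"
    unfolding sig_next_def q_def[symmetric] den using sp Dp s2 su qp by (simp add: field_simps)
  have hl: "lam su N S b = c * sS / (\<sigma> * D)"
    unfolding lam_def q_def[symmetric] den using sp Dp sSp sS2 hb
    by (simp add: field_simps power2_eq_square)
  have hlb: "1 - lam su N S b * b = 1 / D"
  proof -
    have "1 - lam su N S b * b = 1 - c * sS / (\<sigma> * D) * (c * \<sigma> / sS)"
      using hl hb by simp
    also have "c * sS / (\<sigma> * D) * (c * \<sigma> / sS) = c\<^sup>2 / D"
      using sp Dp sSp by (simp add: field_simps power2_eq_square)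
    also have "1 - c\<^sup>2 / D = 1 / D" using Dp by (simp add: field_simps D_def)
    finally show ?thesis .
  qed
  have SDp: "S / D > 0" using S Dp by simp
  have sq: "sqrt (S / D) = sS / sD" by (simp add: sS_def sD_def real_sqrt_divide)
  have r: "sqrt (1/D) = 1 / sD" by (simp add: sD_def real_sqrt_divide)
  have C: "cont su N str k (sig_next su N S b) = (B * \<sigma> / (sS/sD), A * \<sigma> * (sS/sD))"
    unfolding hsig using hyp[OF SDp] sq by (simp add: \<sigma>_def q_def)
  have lhs: "(let l = lam su N S b; (a, d) = cont su N str k (sig_next su N S b)
           in (a * (1 - l * b)\<^sup>2 + b * (1 - l * b), d + a * l\<^sup>2 * su\<^sup>2 * dtN N))
      = (B * \<sigma> / (sS/sD) * (1/D)\<^sup>2 + b * (1/D),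
         A * \<sigma> * (sS/sD) + B * \<sigma> / (sS/sD) * (c * sS / (\<sigma> * D))\<^sup>2 * su\<^sup>2 * q)"
    unfolding C Let_def hlb hl[symmetric] q_def by simp
  have cc: "b*sqrt S/(su*sqrt(dtN N)) = c" by (simp add: c_def \<sigma>_def q_def sS_def)
  have ss: "su*sqrt(dtN N) = \<sigma>" by (simp add: \<sigma>_def q_def)
  have e1: "B * \<sigma> / (sS/sD) * (1/D)\<^sup>2 + b * (1/D) = \<sigma>/sS*(B*(1/sD)^3 + c/D)"
    unfolding hb sD2 using sp sSp sDp by (simp add: field_simps power2_eq_square power3_eq_cube)
  have e2: "A * \<sigma> * (sS/sD) + B * \<sigma> / (sS/sD) * (c * sS / (\<sigma> * D))\<^sup>2 * su\<^sup>2 * q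
      = \<sigma>*sS*(A*(1/sD) + B*(1/sD)^3*c\<^sup>2)"
    unfolding sD2 mult.assoc[of _ "su\<^sup>2" q] s2[symmetric]
    using sp sSp sDp by (simp add: field_simps power2_eq_square power3_eq_cube)
  show ?thesis
    unfolding lhs cc ss sS_def[symmetric] D_def[symmetric] r e1 e2
    by (simp only: c_def[symmetric] D_def[symmetric] r)
qed

definition strat :: "real \<Rightarrow> nat \<Rightarrow> nat \<Rightarrow> real \<Rightarrow> real" where
  "strat su N = (\<lambda>n S. Cc (N - n) * su * sqrt (dtN N) / sqrt S)"

lemma AB1: "Aa 1 = 0" "Bb 1 = 1/2" "Cc 0 = 1"
proof -
  have h: "sqrt (1/2) ^ 3 = sqrt (1/2) * (1/2::real)"
    by (simp add: power3_eq_cube)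
  show "Cc 0 = 1" by (simp add: Cc_def Cf_def)
  show "Aa 1 = 0" "Bb 1 = 1/2" using h by (simp_all add: Aa_def Bb_def Cc_def Cf_def Let_def)
qed

lemma cont_unf: "cont su N str (Suc m) S =
   (let l = lam su N S (str (N - m) S); (a, d) = cont su N str m (sig_next su N S (str (N - m) S))
    in (a * (1 - l * (str (N - m) S))\<^sup>2 + (str (N - m) S) * (1 - l * (str (N - m) S)),
        d + a * l\<^sup>2 * su\<^sup>2 * dtN N))"
  by (simp only: cont.simps Let_def[of "str (N - m) S"])

lemma swap_h: "((p::real)/q*X, p*q*Y) = (X*p/q, Y*p*q)" by simp

lemma cont_formula:
  assumes su: "su > 0" and N: "N \<ge> 1"
  shows "k \<le> N \<Longrightarrow> S > 0 \<Longrightarrow> cont su N (strat su N) k S =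
     (Bb k * (su * sqrt (dtN N)) / sqrt S, Aa k * (su * sqrt (dtN N)) * sqrt S)"
proof (induction k arbitrary: S)
  case 0 then show ?case by (simp add: Aa_def Bb_def)
next
  case (Suc m)
  have IH: "\<And>S'. S' > 0 \<Longrightarrow> cont su N (strat su N) m S' =
     (Bb m * (su * sqrt (dtN N)) / sqrt S', Aa m * (su * sqrt (dtN N)) * sqrt S')"
    using Suc by simp
  have qp: "dtN N > 0" using N by (simp add: dtN_def)
  have sp: "su * sqrt (dtN N) > 0" using su qp by simp
  have Sp: "sqrt S > 0" using Suc by simp
  have c: "strat su N (N - m) S * sqrt S / (su * sqrt (dtN N)) = Cc m"
    using Suc(2) sp Sp su qp by (simp add: strat_def)
  have "cont su N (strat su N) (Suc m) S = (su * sqrt (dtN N) / sqrt S * (Bb m * (sqrt (1/((strat su N (N - m) S*sqrt S/(su * sqrt (dtN N)))\<^sup>2+1)))^3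
            + (strat su N (N - m) S*sqrt S/(su * sqrt (dtN N))) / ((strat su N (N - m) S*sqrt S/(su * sqrt (dtN N)))\<^sup>2+1)),
       su * sqrt (dtN N) * sqrt S * (Aa m * sqrt (1/((strat su N (N - m) S*sqrt S/(su * sqrt (dtN N)))\<^sup>2+1))
            + Bb m * (sqrt (1/((strat su N (N - m) S*sqrt S/(su * sqrt (dtN N)))\<^sup>2+1)))^3 * (strat su N (N - m) S*sqrt S/(su * sqrt (dtN N)))\<^sup>2))"
    unfolding cont_unf by (rule step[OF su N Suc(3) IH])
  then show ?case unfolding c AB_Suc by (simp only: swap_h)
qed

lemma opt_all:
  fixes c :: real
  shows "Aa k * sqrt (1/(c\<^sup>2+1)) + Bb k * (sqrt (1/(c\<^sup>2+1)))^3 * c\<^sup>2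
      \<le> Aa k * sqrt (1/((Cc k)\<^sup>2+1)) + Bb k * (sqrt (1/((Cc k)\<^sup>2+1)))^3 * (Cc k)\<^sup>2"
    and "Aa k * sqrt (1/(c\<^sup>2+1)) + Bb k * (sqrt (1/(c\<^sup>2+1)))^3 * c\<^sup>2
      = Aa k * sqrt (1/((Cc k)\<^sup>2+1)) + Bb k * (sqrt (1/((Cc k)\<^sup>2+1)))^3 * (Cc k)\<^sup>2 \<Longrightarrow>
      Bb k * (sqrt (1/(c\<^sup>2+1)))^3 + c/(c\<^sup>2+1) \<le> Bb k * (sqrt (1/((Cc k)\<^sup>2+1)))^3 + Cc k/((Cc k)\<^sup>2+1)"
proof -
  have "(Aa k * sqrt (1/(c\<^sup>2+1)) + Bb k * (sqrt (1/(c\<^sup>2+1)))^3 * c\<^sup>2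
      \<le> Aa k * sqrt (1/((Cc k)\<^sup>2+1)) + Bb k * (sqrt (1/((Cc k)\<^sup>2+1)))^3 * (Cc k)\<^sup>2) \<and>
      (Aa k * sqrt (1/(c\<^sup>2+1)) + Bb k * (sqrt (1/(c\<^sup>2+1)))^3 * c\<^sup>2
      = Aa k * sqrt (1/((Cc k)\<^sup>2+1)) + Bb k * (sqrt (1/((Cc k)\<^sup>2+1)))^3 * (Cc k)\<^sup>2 \<longrightarrow>
      Bb k * (sqrt (1/(c\<^sup>2+1)))^3 + c/(c\<^sup>2+1) \<le> Bb k * (sqrt (1/((Cc k)\<^sup>2+1)))^3 + Cc k/((Cc k)\<^sup>2+1))"
  proof (cases "k = 0")
    case True
    then show ?thesis using opt_zero[of c] AB1(3) by (simp add: Aa_def Bb_def)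
  next
    case False
    then have I: "Aa k \<ge> 0" "Bb k > 0" "2 * Bb k > Aa k" using inv[of k] by auto
    have C: "Cc k = sqrt ((2 * Bb k - Aa k)/(Aa k + Bb k))" using False by (simp add: Cc_def Cf_def)
    show ?thesis unfolding C using opt_pos[OF I, of c] by blast
  qed
  thus "Aa k * sqrt (1/(c\<^sup>2+1)) + Bb k * (sqrt (1/(c\<^sup>2+1)))^3 * c\<^sup>2
      \<le> Aa k * sqrt (1/((Cc k)\<^sup>2+1)) + Bb k * (sqrt (1/((Cc k)\<^sup>2+1)))^3 * (Cc k)\<^sup>2"
    and "Aa k * sqrt (1/(c\<^sup>2+1)) + Bb k * (sqrt (1/(c\<^sup>2+1)))^3 * c\<^sup>2
      = Aa k * sqrt (1/((Cc k)\<^sup>2+1)) + Bb k * (sqrt (1/((Cc k)\<^sup>2+1)))^3 * (Cc k)\<^sup>2 \<Longrightarrow>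
      Bb k * (sqrt (1/(c\<^sup>2+1)))^3 + c/(c\<^sup>2+1) \<le> Bb k * (sqrt (1/((Cc k)\<^sup>2+1)))^3 + Cc k/((Cc k)\<^sup>2+1)"
    by auto
qed

lemma Cc_pos: "Cc k > 0"
proof (cases "k = 0")
  case True then show ?thesis using AB1(3) by simp
next
  case False
  then have I: "Aa k \<ge> 0" "Bb k > 0" "2 * Bb k > Aa k" using inv[of k] by auto
  have C: "Cc k = sqrt ((2 * Bb k - Aa k)/(Aa k + Bb k))" using False by (simp add: Cc_def Cf_def)
  show ?thesis unfolding C using I by simp
qed

lemma SPE:
  assumes su: "su > 0" and N: "N \<ge> 1"
  shows "is_SPE su N (strat su N)"
  unfolding is_SPE_def
proof (intro ballI allI impI conjI)
  fix n S assume n: "n \<in> {1..N}" and S: "(S::real) > 0"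
  define \<sigma> where "\<sigma> = su * sqrt (dtN N)"
  have qp: "dtN N > 0" using N by (simp add: dtN_def)
  have sp: "\<sigma> > 0" using su qp by (simp add: \<sigma>_def)
  have Sp: "sqrt S > 0" using S by simp
  have hyp: "\<And>S'. S' > 0 \<Longrightarrow> cont su N (strat su N) (N - n) S' =
     (Bb (N - n) * (su * sqrt (dtN N)) / sqrt S', Aa (N - n) * (su * sqrt (dtN N)) * sqrt S')"
    using cont_formula[OF su N] by simp
  have SV: "\<And>b. step_val su N (strat su N) n S b =
    (\<sigma> / sqrt S * (Bb (N-n) * (sqrt (1/((b*sqrt S/\<sigma>)\<^sup>2+1)))^3
            + (b*sqrt S/\<sigma>) / ((b*sqrt S/\<sigma>)\<^sup>2+1)),
       \<sigma> * sqrt S * (Aa (N-n) * sqrt (1/((b*sqrt S/\<sigma>)\<^sup>2+1))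
            + Bb (N-n) * (sqrt (1/((b*sqrt S/\<sigma>)\<^sup>2+1)))^3 * (b*sqrt S/\<sigma>)\<^sup>2))"
    unfolding step_val_def \<sigma>_def by (rule step[OF su N S hyp])
  have c0: "strat su N n S * sqrt S / \<sigma> = Cc (N - n)"
    using sp Sp su qp by (simp add: strat_def \<sigma>_def)
  fix b
  define c where "c = b * sqrt S / \<sigma>"
  have SVb: "step_val su N (strat su N) n S b = (\<sigma> / sqrt S * (Bb (N-n) * (sqrt (1/(c\<^sup>2+1)))^3
            + c / (c\<^sup>2+1)), \<sigma> * sqrt S * (Aa (N-n) * sqrt (1/(c\<^sup>2+1))
            + Bb (N-n) * (sqrt (1/(c\<^sup>2+1)))^3 * c\<^sup>2))" unfolding SV c_def ..
  have SV0: "step_val su N (strat su N) n S (strat su N n S) =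
     (\<sigma> / sqrt S * (Bb (N-n) * (sqrt (1/((Cc (N-n))\<^sup>2+1)))^3 + Cc (N-n) / ((Cc (N-n))\<^sup>2+1)),
      \<sigma> * sqrt S * (Aa (N-n) * sqrt (1/((Cc (N-n))\<^sup>2+1))
            + Bb (N-n) * (sqrt (1/((Cc (N-n))\<^sup>2+1)))^3 * (Cc (N-n))\<^sup>2))"
    unfolding SV c0 ..
  have pp: "\<sigma> * sqrt S > 0" "\<sigma> / sqrt S > 0" using sp Sp by auto
  show "snd (step_val su N (strat su N) n S b) \<le> snd (step_val su N (strat su N) n S (strat su N n S))"
    unfolding SVb SV0 snd_conv using opt_all(1)[of "N-n" c] pp(1)
    by (simp add: mult_left_mono)
  assume "snd (step_val su N (strat su N) n S b) = snd (step_val su N (strat su N) n S (strat su N n S))"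
  hence eq: "Aa (N-n) * sqrt (1/(c\<^sup>2+1)) + Bb (N-n) * (sqrt (1/(c\<^sup>2+1)))^3 * c\<^sup>2
      = Aa (N-n) * sqrt (1/((Cc (N-n))\<^sup>2+1)) + Bb (N-n) * (sqrt (1/((Cc (N-n))\<^sup>2+1)))^3 * (Cc (N-n))\<^sup>2"
    unfolding SVb SV0 snd_conv using pp(1) sp S by simp
  show "fst (step_val su N (strat su N) n S b) \<le> fst (step_val su N (strat su N) n S (strat su N n S))"
    unfolding SVb SV0 fst_conv by (rule mult_left_mono[OF opt_all(2)[OF eq] less_imp_le[OF pp(2)]])
qed

lemma sig_pos:
  assumes su: "su > 0" and N: "N \<ge> 1" and S0: "S0 > 0"
  shows "sig_path su N str S0 n > 0"
proof (induction n)
  case 0 then show ?case using S0 by simp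
next
  case (Suc n)
  have qp: "dtN N > 0" using N by (simp add: dtN_def)
  let ?S = "sig_path su N str S0 n"
  let ?b = "str (Suc n) ?S"
  have "?b\<^sup>2 * ?S \<ge> 0" using Suc by simp
  moreover have "su\<^sup>2 * dtN N > 0" using su qp by simp
  ultimately have "?b\<^sup>2 * ?S + su\<^sup>2 * dtN N > 0" by linarith
  moreover have "?S * su\<^sup>2 * dtN N > 0" using Suc su qp by simp
  ultimately show ?case by (simp add: sig_next_def)
qed

theorem theorem1:
  fixes su sv :: real and N :: nat
  assumes "N \<ge> 1" and "su > 0" and "sv > 0"
  shows "\<exists>str. is_SPE su N str \<and>
    (let Sig = sig_path su N str (sv\<^sup>2);
         beta = (\<lambda>n. str n (Sig (n - 1)));
         alpha = (\<lambda>n. fst (cont su N str (N - n) (Sig n)));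
         delta = (\<lambda>n. snd (cont su N str (N - n) (Sig n)))
     in \<exists>a b c :: nat \<Rightarrow> real.
          a (N - 1) = 0 \<and> b (N - 1) = 1 / 2 \<and> c N = 1 \<and>
          (\<forall>n \<in> {1..N}. c n > 0) \<and>
          (\<forall>n \<in> {1..N - 1}.
             a (n - 1) = a n * sqrt (1 / ((c n)\<^sup>2 + 1))
                         + b n * (sqrt (1 / ((c n)\<^sup>2 + 1))) ^ 3 * (c n)\<^sup>2 \<and>
             b (n - 1) = b n * (sqrt (1 / ((c n)\<^sup>2 + 1))) ^ 3 + c n / ((c n)\<^sup>2 + 1) \<and>
             c n = sqrt ((2 * b n - a n) / (a n + b n))) \<and>
          (\<forall>n < N. delta n = a n * su * sqrt (dtN N) * sqrt (Sig n) \<and>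
                   alpha n = b n * su * sqrt (dtN N) / sqrt (Sig n)) \<and>
          (\<forall>n \<in> {1..N}. beta n = c n * su * sqrt (dtN N) / sqrt (Sig (n - 1))))"
proof -
  let ?str = "strat su N"
  define Sig where "Sig = sig_path su N ?str (sv\<^sup>2)"
  have Sp: "\<And>n. Sig n > 0" unfolding Sig_def using sig_pos assms by simp
  define a where "a = (\<lambda>n. Aa (N - n))"
  define b where "b = (\<lambda>n. Bb (N - n))"
  define c where "c = (\<lambda>n. Cc (N - n))"
  have r1: "a (N - 1) = 0 \<and> b (N - 1) = 1 / 2 \<and> c N = 1"
    using assms(1) AB1 by (simp add: a_def b_def c_def)
  have r2: "\<forall>n \<in> {1..N}. c n > 0" using Cc_pos by (simp add: c_def)
  have r3: "\<forall>n \<in> {1..N - 1}.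
             a (n - 1) = a n * sqrt (1 / ((c n)\<^sup>2 + 1))
                         + b n * (sqrt (1 / ((c n)\<^sup>2 + 1))) ^ 3 * (c n)\<^sup>2 \<and>
             b (n - 1) = b n * (sqrt (1 / ((c n)\<^sup>2 + 1))) ^ 3 + c n / ((c n)\<^sup>2 + 1) \<and>
             c n = sqrt ((2 * b n - a n) / (a n + b n))"
  proof
    fix n assume n: "n \<in> {1..N - 1}"
    then have e: "N - (n - 1) = Suc (N - n)" and ne: "N - n \<noteq> 0" by auto
    show "a (n - 1) = a n * sqrt (1 / ((c n)\<^sup>2 + 1))
                         + b n * (sqrt (1 / ((c n)\<^sup>2 + 1))) ^ 3 * (c n)\<^sup>2 \<and>
             b (n - 1) = b n * (sqrt (1 / ((c n)\<^sup>2 + 1))) ^ 3 + c n / ((c n)\<^sup>2 + 1) \<and>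
             c n = sqrt ((2 * b n - a n) / (a n + b n))"
      unfolding a_def b_def c_def e AB_Suc using ne by (simp add: Cc_def Cf_def)
  qed
  have r4: "\<forall>n < N. snd (cont su N ?str (N - n) (Sig n)) = a n * su * sqrt (dtN N) * sqrt (Sig n) \<and>
                   fst (cont su N ?str (N - n) (Sig n)) = b n * su * sqrt (dtN N) / sqrt (Sig n)"
    using cont_formula[OF assms(2,1) _ Sp] by (simp add: a_def b_def mult.assoc)
  have r5: "\<forall>n \<in> {1..N}. ?str n (Sig (n - 1)) = c n * su * sqrt (dtN N) / sqrt (Sig (n - 1))"
    by (simp add: strat_def c_def)
  show ?thesis
    apply (rule exI[of _ ?str])
    apply (simp only: SPE[OF assms(2,1)] Let_def Sig_def[symmetric])
    using r1 r2 r3 r4 r5 by blast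
qed

end
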